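(* Let $(G,M,\Delta)$ be a Garside structure and $(H,N,\delta)$ a parabolic substructure with $H\neq G$ and $H\ne\{1\}$. Put $\omega=\delta^{-1}\Delta$ and $\Phi(\alpha)=\Delta\alpha\Delta^{-1}$. For an integer $k\ge1$ let $d_k=\omega_1\omega_2\cdots\omega_k$, where $\omega_i=\Phi^{-i+1}(\omega)$ for $i\in\{1,\dots,k\}$. Then $\mathrm{diam}(\pi_H(d_k))\ge k$.
   Context: Let $G$ be a group and $M$ a submonoid with $M\cap M^{-1}=\{1\}$. Define $\alpha\le_L\beta$ iff $\alpha^{-1}\beta\in M$, and $\alpha\le_R\beta$ iff $\beta\alpha^{-1}\in M$. For $a\in M$ let $\mathrm{Div}_L(a)=\{b\in M: b\le_L a\}$, $\mathrm{Div}_R(a)=\{b\in M: b\le_R a\}$; $a$ is balanced if these coincide, and then $\mathrm{Div}(a)$ denotes this set. $M$ is Noetherian if each $a\in M$ admits an $n$ such that $a$ is not a product of more than $n$ non-trivial factors. A Garside structure $(G,M,\Delta)$: $\Delta\in M$ balanced, $M$ Noetherian, $\mathrm{Div}(\Delta)$ finite and generating $M$ as a monoid and $G$ as a group, $(G,\le_L)$ a lattice. A parabolic substructure $(H,N,\delta)$: $\delta\in M$ balanced, $H$ (resp. $N$) the subgroup (resp. submonoid) generated by $\mathrm{Div}(\delta)$, and $\mathrm{Div}(\delta)=\mathrm{Div}(\Delta)\cap N$. With $\mathcal S=\mathrm{Div}(\Delta)\setminus\{1\}$ and $\lg$ the word length w.r.t. $\mathcal S$: $d(\alpha,\beta)=\lg(\alpha^{-1}\beta)$;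 $d(\alpha,H)=\min_{\beta\in H}d(\alpha,\beta)$; $\pi_H(\alpha)=\{\beta\in H: d(\alpha,\beta)=d(\alpha,H)\}$; $\mathrm{diam}(X)=\max\{d(\alpha,\beta):\alpha,\beta\in X\}$. *)

theory Defs
  imports "HOL-Algebra.Algebra"
begin

definition lprod :: "('a, 'b) monoid_scheme \<Rightarrow> 'a list \<Rightarrow> 'a" where
  "lprod G xs = foldr (\<lambda>x y. x \<otimes>\<^bsub>G\<^esub> y) xs \<one>\<^bsub>G\<^esub>"

definition leL :: "('a, 'b) monoid_scheme \<Rightarrow> 'a set \<Rightarrow> 'a \<Rightarrow> 'a \<Rightarrow> bool" where
  "leL G M a b \<longleftrightarrow> inv\<^bsub>G\<^esub> a \<otimes>\<^bsub>G\<^esub> b \<in> M"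

definition leR :: "('a, 'b) monoid_scheme \<Rightarrow> 'a set \<Rightarrow> 'a \<Rightarrow> 'a \<Rightarrow> bool" where
  "leR G M a b \<longleftrightarrow> b \<otimes>\<^bsub>G\<^esub> inv\<^bsub>G\<^esub> a \<in> M"

definition DivL :: "('a, 'b) monoid_scheme \<Rightarrow> 'a set \<Rightarrow> 'a \<Rightarrow> 'a set" where
  "DivL G M a = {b \<in> M. leL G M b a}"

definition DivR :: "('a, 'b) monoid_scheme \<Rightarrow> 'a set \<Rightarrow> 'a \<Rightarrow> 'a set" where
  "DivR G M a = {b \<in> M. leR G M b a}"

definition balanced :: "('a, 'b) monoid_scheme \<Rightarrow> 'a set \<Rightarrow> 'a \<Rightarrow> bool" where
  "balanced G M a \<longleftrightarrow> a \<in> M \<and> DivL G M a = DivR G M a"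

(* Div(a), used for balanced a *)
definition Div :: "('a, 'b) monoid_scheme \<Rightarrow> 'a set \<Rightarrow> 'a \<Rightarrow> 'a set" where
  "Div G M a = DivL G M a"

inductive_set mgen :: "('a, 'b) monoid_scheme \<Rightarrow> 'a set \<Rightarrow> 'a set"
  for G and S where
    one: "\<one>\<^bsub>G\<^esub> \<in> mgen G S"
  | incl: "s \<in> S \<Longrightarrow> s \<in> mgen G S"
  | mult: "x \<in> mgen G S \<Longrightarrow> y \<in> mgen G S \<Longrightarrow> x \<otimes>\<^bsub>G\<^esub> y \<in> mgen G S"

definition is_submonoid :: "('a, 'b) monoid_scheme \<Rightarrow> 'a set \<Rightarrow> bool" where
  "is_submonoid G M \<longleftrightarrow> M \<subseteq> carrier G \<and> \<one>\<^bsub>G\<^esub> \<in> M \<and>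
     (\<forall>x\<in>M. \<forall>y\<in>M. x \<otimes>\<^bsub>G\<^esub> y \<in> M)"

definition noetherian :: "('a, 'b) monoid_scheme \<Rightarrow> 'a set \<Rightarrow> bool" where
  "noetherian G M \<longleftrightarrow> (\<forall>a\<in>M. \<exists>n::nat. \<not> (\<exists>xs. length xs > n \<and>
      set xs \<subseteq> M - {\<one>\<^bsub>G\<^esub>} \<and> lprod G xs = a))"

definition is_lattice_L :: "('a, 'b) monoid_scheme \<Rightarrow> 'a set \<Rightarrow> bool" where
  "is_lattice_L G M \<longleftrightarrow> (\<forall>a\<in>carrier G. \<forall>b\<in>carrier G.
     (\<exists>m\<in>carrier G. leL G M m a \<and> leL G M m b \<and>
        (\<forall>c\<in>carrier G. leL G M c a \<and> leL G M c b \<longrightarrow> leL G M c m)) \<and>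
     (\<exists>j\<in>carrier G. leL G M a j \<and> leL G M b j \<and>
        (\<forall>c\<in>carrier G. leL G M a c \<and> leL G M b c \<longrightarrow> leL G M j c)))"

(* Garside structure (G, M, Delta), including the standing assumptions on M *)
definition garside :: "('a, 'b) monoid_scheme \<Rightarrow> 'a set \<Rightarrow> 'a \<Rightarrow> bool" where
  "garside G M \<Delta> \<longleftrightarrow> group G \<and> is_submonoid G M \<and>
     M \<inter> (m_inv G ` M) = {\<one>\<^bsub>G\<^esub>} \<and>
     balanced G M \<Delta> \<and> noetherian G M \<and> finite (Div G M \<Delta>) \<and>
     mgen G (Div G M \<Delta>) = M \<and> generate G (Div G M \<Delta>) = carrier G \<and>
     is_lattice_L G M"

definition parabolic :: "('a, 'b) monoid_scheme \<Rightarrow> 'a set \<Rightarrow> 'a \<Rightarrow> 'a set \<Rightarrow> 'a set \<Rightarrow> 'a \<Rightarrow> bool" where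
  "parabolic G M \<Delta> H N \<delta> \<longleftrightarrow> \<delta> \<in> M \<and> balanced G M \<delta> \<and>
     H = generate G (Div G M \<delta>) \<and> N = mgen G (Div G M \<delta>) \<and>
     Div G M \<delta> = Div G M \<Delta> \<inter> N"

definition gens :: "('a, 'b) monoid_scheme \<Rightarrow> 'a set \<Rightarrow> 'a \<Rightarrow> 'a set" where
  "gens G M \<Delta> = Div G M \<Delta> - {\<one>\<^bsub>G\<^esub>}"

definition wlen :: "('a, 'b) monoid_scheme \<Rightarrow> 'a set \<Rightarrow> 'a \<Rightarrow> 'a \<Rightarrow> nat" where
  "wlen G M \<Delta> x = (LEAST n. \<exists>xs. length xs = n \<and>
      set xs \<subseteq> gens G M \<Delta> \<union> m_inv G ` gens G M \<Delta> \<and> lprod G xs = x)"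

definition gdist :: "('a, 'b) monoid_scheme \<Rightarrow> 'a set \<Rightarrow> 'a \<Rightarrow> 'a \<Rightarrow> 'a \<Rightarrow> nat" where
  "gdist G M \<Delta> a b = wlen G M \<Delta> (inv\<^bsub>G\<^esub> a \<otimes>\<^bsub>G\<^esub> b)"

definition setdist :: "('a, 'b) monoid_scheme \<Rightarrow> 'a set \<Rightarrow> 'a \<Rightarrow> 'a \<Rightarrow> 'a set \<Rightarrow> nat" where
  "setdist G M \<Delta> a H = (LEAST n. \<exists>b\<in>H. gdist G M \<Delta> a b = n)"

definition proj :: "('a, 'b) monoid_scheme \<Rightarrow> 'a set \<Rightarrow> 'a \<Rightarrow> 'a set \<Rightarrow> 'a \<Rightarrow> 'a set" where
  "proj G M \<Delta> H a = {b \<in> H. gdist G M \<Delta> a b = setdist G M \<Delta> a H}"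

(* diam X = max of distances (X is finite in the application) *)
definition diam :: "('a, 'b) monoid_scheme \<Rightarrow> 'a set \<Rightarrow> 'a \<Rightarrow> 'a set \<Rightarrow> nat" where
  "diam G M \<Delta> Y = Max ((\<lambda>(a, b). gdist G M \<Delta> a b) ` (Y \<times> Y))"

definition Phi_pow :: "('a, 'b) monoid_scheme \<Rightarrow> 'a \<Rightarrow> int \<Rightarrow> 'a \<Rightarrow> 'a" where
  "Phi_pow G \<Delta> m a = \<Delta> [^]\<^bsub>G\<^esub> m \<otimes>\<^bsub>G\<^esub> a \<otimes>\<^bsub>G\<^esub> \<Delta> [^]\<^bsub>G\<^esub> (- m)"

definition omega_i :: "('a, 'b) monoid_scheme \<Rightarrow> 'a \<Rightarrow> 'a \<Rightarrow> nat \<Rightarrow> 'a" where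
  "omega_i G \<Delta> \<omega> i = Phi_pow G \<Delta> (- int i + 1) \<omega>"

definition dk :: "('a, 'b) monoid_scheme \<Rightarrow> 'a \<Rightarrow> 'a \<Rightarrow> nat \<Rightarrow> 'a" where
  "dk G \<Delta> \<omega> k = lprod G (map (omega_i G \<Delta> \<omega>) [1..<k+1])"

end

theory Submission
  imports Defs
begin


lemma (in group) cancel_simps [simp]:
  "x \<in> carrier G \<Longrightarrow> y \<in> carrier G \<Longrightarrow> x \<otimes> (inv x \<otimes> y) = y"
  "x \<in> carrier G \<Longrightarrow> y \<in> carrier G \<Longrightarrow> inv x \<otimes> (x \<otimes> y) = y"
  by (simp_all add: m_assoc[symmetric])

locale gctx = group G for G (structure) +
  fixes M :: "'a set" and D d :: 'a and H N :: "'a set"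
  assumes gar: "garside G M D" and par: "parabolic G M D H N d"
begin

abbreviation le where "le a b \<equiv> leL G M a b"

lemma subm: "is_submonoid G M" using gar by (simp add: garside_def)
lemma M_car: "M \<subseteq> carrier G" using subm by (simp add: is_submonoid_def)
lemma M_carI[simp]: "x \<in> M \<Longrightarrow> x \<in> carrier G" using M_car by auto
lemma one_M[simp]: "\<one> \<in> M" using subm by (simp add: is_submonoid_def)
lemma mult_M[simp]: "x \<in> M \<Longrightarrow> y \<in> M \<Longrightarrow> x \<otimes> y \<in> M" using subm by (simp add: is_submonoid_def)
lemma MinvM: "x \<in> M \<Longrightarrow> inv x \<in> M \<Longrightarrow> x = \<one>"
proof -
  assume a: "x \<in> M" "inv x \<in> M"
  have "M \<inter> (m_inv G ` M) = {\<one>}" using gar by (simp add: garside_def)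
  moreover have "inv x \<in> M \<inter> (m_inv G ` M)" using a by auto
  ultimately have "inv x = \<one>" by auto
  have "x = inv (inv x)" using a by simp
  also have "\<dots> = \<one>" using \<open>inv x = \<one>\<close> by simp
  finally show ?thesis .
qed

lemma le_def: "le a b \<longleftrightarrow> inv a \<otimes> b \<in> M" by (simp add: leL_def)

lemma le_refl: "a \<in> carrier G \<Longrightarrow> le a a" by (simp add: le_def)
lemma le_trans: "a \<in> carrier G \<Longrightarrow> b \<in> carrier G \<Longrightarrow> c \<in> carrier G \<Longrightarrow> le a b \<Longrightarrow> le b c \<Longrightarrow> le a c"
proof -
  assume c: "a \<in> carrier G" "b \<in> carrier G" "c \<in> carrier G" and l: "le a b" "le b c"
  have "inv a \<otimes> c = (inv a \<otimes> b) \<otimes> (inv b \<otimes> c)" using c by (simp add: m_assoc)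
  thus ?thesis using l by (simp add: le_def)
qed
lemma le_antisym: "a \<in> carrier G \<Longrightarrow> b \<in> carrier G \<Longrightarrow> le a b \<Longrightarrow> le b a \<Longrightarrow> a = b"
proof -
  assume c: "a \<in> carrier G" "b \<in> carrier G" and l: "le a b" "le b a"
  have "inv (inv a \<otimes> b) = inv b \<otimes> a" using c by (simp add: inv_mult_group)
  hence "inv a \<otimes> b = \<one>" using l MinvM[of "inv a \<otimes> b"] by (simp add: le_def)
  hence "a \<otimes> (inv a \<otimes> b) = a" using c by simp
  thus ?thesis using c by simp
qed
lemma le_left: "s \<in> carrier G \<Longrightarrow> a \<in> carrier G \<Longrightarrow> b \<in> carrier G \<Longrightarrow> le (s \<otimes> a) (s \<otimes> b) \<longleftrightarrow> le a b"
  by (simp add: le_def inv_mult_group m_assoc)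
lemma le_oneI: "x \<in> M \<Longrightarrow> le \<one> x" by (simp add: le_def)
lemma le_one_iff: "x \<in> carrier G \<Longrightarrow> le \<one> x \<longleftrightarrow> x \<in> M" by (simp add: le_def)
lemma le_multR: "a \<in> carrier G \<Longrightarrow> m \<in> M \<Longrightarrow> le a (a \<otimes> m)" by (simp add: le_def)
lemma le_ex: "a \<in> carrier G \<Longrightarrow> b \<in> carrier G \<Longrightarrow> le a b \<Longrightarrow> \<exists>m\<in>M. b = a \<otimes> m"
  by (rule bexI[of _ "inv a \<otimes> b"]) (simp_all add: le_def)

lemma join_ex: "a \<in> carrier G \<Longrightarrow> b \<in> carrier G \<Longrightarrow>
   \<exists>j\<in>carrier G. le a j \<and> le b j \<and> (\<forall>c\<in>carrier G. le a c \<and> le b c \<longrightarrow> le j c)"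
  using gar unfolding garside_def is_lattice_L_def by blast

lemma balD: "balanced G M D" using gar by (simp add: garside_def)
lemma D_M[simp]: "D \<in> M" using balD by (simp add: balanced_def)
lemma D_car[simp]: "D \<in> carrier G" by simp
lemma genD: "generate G (Div G M D) = carrier G" using gar by (simp add: garside_def)
lemma mgenD: "mgen G (Div G M D) = M" using gar by (simp add: garside_def)
lemma finD: "finite (Div G M D)" using gar by (simp add: garside_def)

lemma Div_M: "Div G M e \<subseteq> M" by (auto simp: Div_def DivL_def)
lemma Div_iff: "t \<in> Div G M e \<longleftrightarrow> t \<in> M \<and> inv t \<otimes> e \<in> M"
  by (simp add: Div_def DivL_def leL_def)
lemma DivR_iff: "balanced G M e \<Longrightarrow> t \<in> Div G M e \<longleftrightarrow> t \<in> M \<and> e \<otimes> inv t \<in> M"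
  by (simp add: Div_def balanced_def DivR_def leR_def)

lemma bal_c1: assumes b: "balanced G M e" and t: "t \<in> Div G M e"
  shows "e \<otimes> inv t \<in> Div G M e"
proof -
  have e: "e \<in> M" using b by (simp add: balanced_def)
  have tm: "t \<in> M" "e \<otimes> inv t \<in> M" using DivR_iff[OF b] t by auto
  have "inv (e \<otimes> inv t) \<otimes> e = t" using tm e by (simp add: inv_mult_group m_assoc)
  thus ?thesis using tm Div_iff by auto
qed
lemma bal_c2: assumes b: "balanced G M e" and t: "t \<in> Div G M e"
  shows "inv t \<otimes> e \<in> Div G M e"
proof -
  have e: "e \<in> M" using b by (simp add: balanced_def)
  have tm: "t \<in> M" "inv t \<otimes> e \<in> M" using Div_iff t by auto
  have "e \<otimes> inv (inv t \<otimes> e) = t" using tm e by (simp add: inv_mult_group m_assoc)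
  thus ?thesis using tm DivR_iff[OF b] by auto
qed
lemma bal_conj1: assumes b: "balanced G M e" and t: "t \<in> Div G M e"
  shows "e \<otimes> t \<otimes> inv e \<in> Div G M e"
proof -
  have e: "e \<in> M" using b by (simp add: balanced_def)
  have tm: "t \<in> M" using t Div_iff by auto
  have "e \<otimes> inv (e \<otimes> inv t) = e \<otimes> t \<otimes> inv e" using tm e by (simp add: inv_mult_group m_assoc)
  thus ?thesis using bal_c1[OF b bal_c1[OF b t]] by simp
qed
lemma bal_conj2: assumes b: "balanced G M e" and t: "t \<in> Div G M e"
  shows "inv e \<otimes> t \<otimes> e \<in> Div G M e"
proof -
  have e: "e \<in> M" using b by (simp add: balanced_def)
  have tm: "t \<in> M" using t Div_iff by auto
  have "inv (inv t \<otimes> e) \<otimes> e = inv e \<otimes> t \<otimes> e" using tm e by (simp add: inv_mult_group m_assoc)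
  thus ?thesis using bal_c2[OF b bal_c2[OF b t]] by simp
qed

lemma mgen_car1: "x \<in> mgen G S \<Longrightarrow> S \<subseteq> carrier G \<Longrightarrow> x \<in> carrier G"
  by (induction rule: mgen.induct) auto
lemma mgen_car: "S \<subseteq> carrier G \<Longrightarrow> mgen G S \<subseteq> carrier G"
  using mgen_car1 by blast

lemma mgen_conj: assumes S: "S \<subseteq> carrier G" and e: "e \<in> carrier G"
  and cl: "\<And>t. t \<in> S \<Longrightarrow> e \<otimes> t \<otimes> inv e \<in> S"
  and x: "x \<in> mgen G S" shows "e \<otimes> x \<otimes> inv e \<in> mgen G S"
  using x
proof (induction rule: mgen.induct)
  case one then show ?case using e by (simp add: mgen.one)
next
  case (incl s) then show ?case using cl by (simp add: mgen.incl)
next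
  case (mult x y)
  have xc: "x \<in> carrier G" "y \<in> carrier G" using mult.hyps mgen_car[OF S] by auto
  have "e \<otimes> (x \<otimes> y) \<otimes> inv e = (e \<otimes> x \<otimes> inv e) \<otimes> (e \<otimes> y \<otimes> inv e)"
    using xc e by (simp add: m_assoc)
  then show ?case using mult.IH mgen.mult by metis
qed

end


context gctx
begin

lemma d_M[simp]: "d \<in> M" using par unfolding parabolic_def by blast
lemma d_car[simp]: "d \<in> carrier G" by simp
lemma bald: "balanced G M d" using par unfolding parabolic_def by blast
lemma H_def: "H = generate G (Div G M d)" using par unfolding parabolic_def by blast
lemma N_def: "N = mgen G (Div G M d)" using par unfolding parabolic_def by blast
lemma DivdN: "Div G M d = Div G M D \<inter> N" using par unfolding parabolic_def by blast

lemma mgen_subM: "x \<in> mgen G S \<Longrightarrow> S \<subseteq> M \<Longrightarrow> x \<in> M"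
  by (induction rule: mgen.induct) auto

lemma Divd_N: "t \<in> Div G M d \<Longrightarrow> t \<in> N" using N_def by (simp add: mgen.incl)
lemma N_M: "x \<in> N \<Longrightarrow> x \<in> M"
proof -
  assume "x \<in> N" hence "x \<in> mgen G (Div G M d)" using N_def by simp
  thus ?thesis by (rule mgen_subM) (rule Div_M)
qed
lemma N_car[simp]: "x \<in> N \<Longrightarrow> x \<in> carrier G" using N_M by simp
lemma N_one[simp]: "\<one> \<in> N" using N_def by (simp add: mgen.one)
lemma N_mult[simp]: "x \<in> N \<Longrightarrow> y \<in> N \<Longrightarrow> x \<otimes> y \<in> N" using N_def by (simp add: mgen.mult)
lemma d_Divd: "d \<in> Div G M d" by (simp add: Div_iff)
lemma d_N[simp]: "d \<in> N" using d_Divd Divd_N by simp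
lemma d_DivD: "d \<in> Div G M D" using d_Divd DivdN by auto
lemma Divd_DivD: "t \<in> Div G M d \<Longrightarrow> t \<in> Div G M D" using DivdN by auto
lemma D_DivD: "D \<in> Div G M D" by (simp add: Div_iff)

lemma DivD_car: "Div G M D \<subseteq> carrier G" using Div_M[of D] M_car by (rule subset_trans)
lemma Divd_car: "Div G M d \<subseteq> carrier G" using Div_M[of d] M_car by (rule subset_trans)

lemma pow_M: "x \<in> M \<Longrightarrow> x [^] (n::nat) \<in> M"
  by (induction n) auto
lemma pow_N: "x \<in> N \<Longrightarrow> x [^] (n::nat) \<in> N"
  by (induction n) auto

lemma conj_pow_gen:
  assumes K: "K \<subseteq> carrier G" and e: "e \<in> carrier G"
    and cl: "\<And>x. x \<in> K \<Longrightarrow> e \<otimes> x \<otimes> inv e \<in> K"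
  shows "x \<in> K \<Longrightarrow> e [^] (n::nat) \<otimes> x \<otimes> inv (e [^] n) \<in> K"
proof (induction n arbitrary: x)
  case 0 then show ?case using K by auto
next
  case (Suc n)
  have xc: "x \<in> carrier G" using Suc K by auto
  have "e [^] Suc n \<otimes> x \<otimes> inv (e [^] Suc n) = e \<otimes> (e [^] n \<otimes> x \<otimes> inv (e [^] n)) \<otimes> inv e"
    unfolding nat_pow_Suc2[OF e] using xc e by (simp add: inv_mult_group m_assoc)
  then show ?case using Suc cl by simp
qed

lemma M_conjD1: "x \<in> M \<Longrightarrow> D \<otimes> x \<otimes> inv D \<in> M"
proof -
  assume "x \<in> M" hence "x \<in> mgen G (Div G M D)" using mgenD by simp
  hence "D \<otimes> x \<otimes> inv D \<in> mgen G (Div G M D)"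
    by (rule mgen_conj[OF DivD_car D_car bal_conj1[OF balD], rotated])
  thus ?thesis using mgenD by simp
qed
lemma M_conjD2: "x \<in> M \<Longrightarrow> inv D \<otimes> x \<otimes> inv (inv D) \<in> M"
proof -
  have cl: "\<And>x. x \<in> Div G M D \<Longrightarrow> inv D \<otimes> x \<otimes> inv (inv D) \<in> Div G M D"
    using bal_conj2[OF balD] by simp
  assume "x \<in> M" hence "x \<in> mgen G (Div G M D)" using mgenD by simp
  hence "inv D \<otimes> x \<otimes> inv (inv D) \<in> mgen G (Div G M D)"
    by (rule mgen_conj[OF DivD_car inv_closed[OF D_car] cl, rotated])
  thus ?thesis using mgenD by simp
qed
lemma M_conjDn: "x \<in> M \<Longrightarrow> D [^] (n::nat) \<otimes> x \<otimes> inv (D [^] n) \<in> M"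
  using conj_pow_gen[OF M_car D_car M_conjD1] by blast
lemma M_conjDn2: "x \<in> M \<Longrightarrow> inv (D [^] (n::nat)) \<otimes> x \<otimes> D [^] n \<in> M"
proof -
  assume x: "x \<in> M"
  have "(inv D) [^] n \<otimes> x \<otimes> inv ((inv D) [^] n) \<in> M"
    using conj_pow_gen[OF M_car inv_closed[OF D_car] M_conjD2] x by blast
  thus ?thesis by (simp add: nat_pow_inv)
qed
lemma DivD_conjDn2: "t \<in> Div G M D \<Longrightarrow> inv (D [^] (n::nat)) \<otimes> t \<otimes> D [^] n \<in> Div G M D"
proof -
  assume x: "t \<in> Div G M D"
  have cl: "\<And>x. x \<in> Div G M D \<Longrightarrow> inv D \<otimes> x \<otimes> inv (inv D) \<in> Div G M D"
    using bal_conj2[OF balD] by simp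
  have "(inv D) [^] n \<otimes> t \<otimes> inv ((inv D) [^] n) \<in> Div G M D"
    using conj_pow_gen[OF DivD_car inv_closed[OF D_car] cl] x by blast
  thus ?thesis by (simp add: nat_pow_inv)
qed
lemma N_conjd1: "x \<in> N \<Longrightarrow> d \<otimes> x \<otimes> inv d \<in> N"
proof -
  assume "x \<in> N" hence "x \<in> mgen G (Div G M d)" using N_def by simp
  hence "d \<otimes> x \<otimes> inv d \<in> mgen G (Div G M d)"
    by (rule mgen_conj[OF Divd_car d_car bal_conj1[OF bald], rotated])
  thus ?thesis using N_def by simp
qed
lemma N_conjdn: "x \<in> N \<Longrightarrow> d [^] (n::nat) \<otimes> x \<otimes> inv (d [^] n) \<in> N"
proof -
  have "N \<subseteq> carrier G" by auto
  thus "x \<in> N \<Longrightarrow> ?thesis" using conj_pow_gen[OF _ d_car N_conjd1] by blast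
qed

end


context gctx
begin

lemma mgen_cons_induct:
  assumes b: "b \<in> mgen G S" and S: "S \<subseteq> carrier G" and P1: "P \<one>"
    and step: "\<And>s b. s \<in> S \<Longrightarrow> b \<in> mgen G S \<Longrightarrow> P b \<Longrightarrow> P (s \<otimes> b)"
  shows "P b"
proof -
  have "\<forall>y\<in>mgen G S. P y \<longrightarrow> P (b \<otimes> y)" using b
  proof (induction rule: mgen.induct)
    case one show ?case using mgen_car[OF S] by auto
  next
    case (incl s) show ?case using step incl by auto
  next
    case (mult x y)
    show ?case
    proof (intro ballI impI)
      fix z assume z: "z \<in> mgen G S" "P z"
      have c: "x \<in> carrier G" "y \<in> carrier G" "z \<in> carrier G"
        using mult.hyps z mgen_car[OF S] by auto
      have "y \<otimes> z \<in> mgen G S" using mult.hyps z by (simp add: mgen.mult)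
      moreover have "P (y \<otimes> z)" using mult.IH z by blast
      ultimately have "P (x \<otimes> (y \<otimes> z))" using mult.IH by blast
      thus "P (x \<otimes> y \<otimes> z)" using c by (simp add: m_assoc)
    qed
  qed
  hence "P (b \<otimes> \<one>)" using P1 mgen.one by blast
  thus ?thesis using b mgen_car[OF S] by auto
qed

lemma le_D_xD: "x \<in> M \<Longrightarrow> le D (x \<otimes> D)"
proof -
  assume x: "x \<in> M"
  have "inv D \<otimes> x \<otimes> inv (inv D) \<in> M" using M_conjD2[OF x] .
  hence "inv D \<otimes> (x \<otimes> D) \<in> M" using x by (simp add: m_assoc)
  thus ?thesis by (simp add: le_def)
qed

lemma lemK:
  assumes x: "x \<in> M" and y: "y \<in> M" and c: "c \<in> carrier G" and cD: "le c D"
    and cxy: "le c (x \<otimes> y)"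
  shows "\<exists>z\<in>carrier G. le z D \<and> le z y \<and> le c (x \<otimes> z)"
proof -
  obtain j where j: "j \<in> carrier G" "le x j" "le c j"
    and jmin: "\<forall>c'\<in>carrier G. le x c' \<and> le c c' \<longrightarrow> le j c'"
    using join_ex[of x c] c x by auto
  have xc: "x \<in> carrier G" "y \<in> carrier G" using x y by auto
  have "le j (x \<otimes> y)" using jmin le_multR[OF xc(1) y] cxy xc by simp
  moreover have "le j (x \<otimes> D)"
  proof -
    have "le c (x \<otimes> D)" using le_trans[OF c D_car _ cD le_D_xD[OF x]] xc by simp
    thus ?thesis using jmin le_multR[OF xc(1) D_M] xc by simp
  qed
  moreover define z where "z = inv x \<otimes> j"
  moreover have zc: "z \<in> carrier G" and xz: "x \<otimes> z = j" using xc j by (simp_all add: z_def)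
  ultimately have "le z y" "le z D" using le_left[OF xc(1) zc] xc by auto
  thus ?thesis using zc xz j by auto
qed

lemma P1:
  assumes b: "b \<in> N" shows "\<forall>c\<in>carrier G. le c D \<and> le c b \<longrightarrow> le c d"
proof -
  have bm: "b \<in> mgen G (Div G M d)" using b N_def by simp
  show ?thesis
  proof (rule mgen_cons_induct[where P = "\<lambda>b. \<forall>c\<in>carrier G. le c D \<and> le c b \<longrightarrow> le c d", OF bm Divd_car])
    show "\<forall>c\<in>carrier G. le c D \<and> le c \<one> \<longrightarrow> le c d"
      using le_trans[OF _ one_closed d_car] le_oneI[OF d_M] by blast
  next
    fix s b' assume s: "s \<in> Div G M d" and b': "b' \<in> mgen G (Div G M d)"
      and IH: "\<forall>c\<in>carrier G. le c D \<and> le c b' \<longrightarrow> le c d"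
    have b'N: "b' \<in> N" using b' N_def by simp
    hence b'M: "b' \<in> M" by (rule N_M)
    have sN: "s \<in> N" using s by (rule Divd_N)
    hence sM: "s \<in> M" by (rule N_M)
    have sD: "le s D" using Divd_DivD[OF s] by (simp add: Div_iff le_def)
    show "\<forall>c\<in>carrier G. le c D \<and> le c (s \<otimes> b') \<longrightarrow> le c d"
    proof (intro ballI impI, elim conjE)
      fix c assume c: "c \<in> carrier G" and cD: "le c D" and cb: "le c (s \<otimes> b')"
      obtain j where j: "j \<in> carrier G" "le c j" "le s j"
        and jmin: "\<forall>c'\<in>carrier G. le c c' \<and> le s c' \<longrightarrow> le j c'"
        using join_ex[of c s] c sM by auto
      have jD: "le j D" using jmin cD sD by simp
      have jb: "le j (s \<otimes> b')" using jmin cb le_multR[OF _ b'M, of s] sM b'M by simp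
      obtain z where z: "z \<in> carrier G" "le z D" "le z b'" "le j (s \<otimes> z)"
        using lemK[OF sM b'M j(1) jD jb] by blast
      have zd: "le z d" using IH z by blast
      define q where "q = inv s \<otimes> j"
      have qM: "q \<in> M" using j(3) by (simp add: q_def le_def)
      have sq: "s \<otimes> q = j" using sM j by (simp add: q_def)
      have "le q z" using le_left[of s q z] z(4) sq sM qM z by simp
      hence "le q d" using le_trans[OF _ z(1) d_car _ zd] qM by simp
      hence "q \<in> Div G M d" using qM by (simp add: Div_iff le_def)
      hence "j \<in> N" using sq sN Divd_N N_mult by metis
      hence "j \<in> Div G M d" using DivdN jD N_M by (simp add: Div_iff le_def)
      hence "le j d" by (simp add: Div_iff le_def)
      thus "le c d" using le_trans[OF c j(1) d_car j(2)] by simp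
    qed
  qed
qed

lemma not_sup:
  assumes d1: "d \<noteq> \<one>" shows "D [^] (j::nat) \<otimes> inv (d [^] Suc j) \<notin> M"
proof (induction j)
  case 0
  show ?case
  proof
    assume "D [^] (0::nat) \<otimes> inv (d [^] Suc 0) \<in> M"
    hence "inv d \<in> M" by simp
    thus False using MinvM[OF d_M] d1 by simp
  qed
next
  case (Suc j)
  show ?case
  proof
    define z where "z = D [^] Suc j \<otimes> inv (d [^] Suc (Suc j))"
    assume zM: "D [^] Suc j \<otimes> inv (d [^] Suc (Suc j)) \<in> M"
    hence zM: "z \<in> M" by (simp add: z_def)
    have dM: "d [^] Suc (Suc j) \<in> M" "d [^] Suc (Suc j) \<in> N" using pow_M pow_N by auto
    have zd: "z \<otimes> d [^] Suc (Suc j) = D [^] Suc j" by (simp add: z_def m_assoc)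
    have "le D (D [^] Suc j)"
      unfolding nat_pow_Suc2[OF D_car] using le_multR[OF D_car pow_M[OF D_M]] by simp
    hence "le D (z \<otimes> d [^] Suc (Suc j))" using zd by simp
    then obtain w where w: "w \<in> carrier G" "le w D" "le w (d [^] Suc (Suc j))" "le D (z \<otimes> w)"
      using lemK[OF zM dM(1) D_car le_refl[OF D_car]] by blast
    have "le w d" using P1[OF dM(2)] w by blast
    hence "le (z \<otimes> w) (z \<otimes> d)" using le_left zM w by simp
    hence "le D (z \<otimes> d)" using le_trans[OF D_car _ _ w(4)] zM w by simp
    hence "inv D \<otimes> (z \<otimes> d) \<in> M" by (simp add: le_def)
    moreover have "inv D \<otimes> (z \<otimes> d) = D [^] j \<otimes> inv (d [^] Suc j)"
      unfolding z_def nat_pow_Suc2[OF D_car] nat_pow_Suc2[OF d_car]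
      by (simp add: inv_mult_group m_assoc)
    ultimately show False using Suc.IH by simp
  qed
qed

lemma H_dec: "g \<in> H \<Longrightarrow> \<exists>p::nat. \<exists>b\<in>N. g = inv (d [^] p) \<otimes> b"
proof -
  assume "g \<in> H" hence "g \<in> generate G (Div G M d)" using H_def by simp
  thus ?thesis
  proof (induction rule: generate.induct)
    case one show ?case by (rule exI[of _ 0]) (rule bexI[of _ "\<one>"], simp_all)
  next
    case (incl h) show ?case
      using incl Divd_N[OF incl] by (intro exI[of _ 0] bexI[of _ h]) auto
  next
    case (inv h)
    have hM: "h \<in> M" using inv Div_M by auto
    have "d \<otimes> inv h \<in> N" using bal_c1[OF bald inv] Divd_N by simp
    moreover have "inv h = inv (d [^] (1::nat)) \<otimes> (d \<otimes> inv h)" using hM by simp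
    ultimately show ?case by blast
  next
    case (eng g1 g2)
    from eng.IH(1) obtain p1 :: nat and b1 where b1: "b1 \<in> N" "g1 = inv (d [^] p1) \<otimes> b1" by auto
    from eng.IH(2) obtain p2 :: nat and b2 where b2: "b2 \<in> N" "g2 = inv (d [^] p2) \<otimes> b2" by auto
    have "(d [^] p2 \<otimes> b1 \<otimes> inv (d [^] p2)) \<otimes> b2 \<in> N" using N_conjdn[OF b1(1)] b2 by simp
    moreover have "g1 \<otimes> g2 = inv (d [^] (p2 + p1)) \<otimes> ((d [^] p2 \<otimes> b1 \<otimes> inv (d [^] p2)) \<otimes> b2)"
      unfolding b1 b2 nat_pow_mult[OF d_car, symmetric] using b1 b2
      by (simp add: inv_mult_group m_assoc)
    ultimately show ?case by blast
  qed
qed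

lemma H_car: "H \<subseteq> carrier G" using H_def generate_incl[OF Divd_car] by simp
lemma H_sub: "subgroup H G" using H_def generate_is_subgroup[OF Divd_car] by simp

lemma not_inf:
  assumes Hne: "H \<noteq> carrier G" and g: "g \<in> H" and j: "j \<ge> 1"
  shows "inv (D [^] (j::nat)) \<otimes> g \<notin> M"
proof
  assume mM: "inv (D [^] j) \<otimes> g \<in> M"
  define m where "m = inv (D [^] j) \<otimes> g"
  have gc: "g \<in> carrier G" using g H_car by auto
  obtain p b where b: "b \<in> N" "g = inv (d [^] (p::nat)) \<otimes> b" using H_dec[OF g] by blast
  have bc: "b \<in> carrier G" using b by simp
  have jj: "j = Suc (j - 1)" using j by simp
  have "inv D \<otimes> b = (inv D \<otimes> d [^] p \<otimes> inv (inv D)) \<otimes> D [^] (j - 1) \<otimes> m"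
  proof -
    have "b = d [^] p \<otimes> g" using b bc by simp
    also have "g = D [^] j \<otimes> m" using gc by (simp add: m_def)
    finally have "b = d [^] p \<otimes> (D \<otimes> D [^] (j - 1) \<otimes> m)"
      using nat_pow_Suc2[OF D_car, of "j - 1"] jj by simp
    thus ?thesis using mM by (simp add: m_def m_assoc)
  qed
  moreover have "inv D \<otimes> d [^] p \<otimes> inv (inv D) \<in> M" using M_conjD2 pow_M[OF d_M] by simp
  ultimately have "inv D \<otimes> b \<in> M" using pow_M[OF D_M] mM by (simp add: m_def)
  hence "le D b" by (simp add: le_def)
  hence Dd: "le D d" using P1[OF b(1)] le_refl[OF D_car] by simp
  have "Div G M D \<subseteq> Div G M d"
  proof
    fix t assume t: "t \<in> Div G M D"
    hence "le t D" "t \<in> M" by (simp_all add: Div_iff le_def)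
    hence "le t d" using le_trans[OF _ D_car d_car _ Dd] by simp
    thus "t \<in> Div G M d" using \<open>t \<in> M\<close> by (simp add: Div_iff le_def)
  qed
  hence "carrier G \<subseteq> H" using mono_generate genD H_def by metis
  thus False using Hne H_car by blast
qed

lemma d_ne1: assumes "H \<noteq> {\<one>}" shows "d \<noteq> \<one>"
proof
  assume d1: "d = \<one>"
  have "Div G M d \<subseteq> {\<one>}"
  proof
    fix t assume "t \<in> Div G M d"
    hence tM: "t \<in> M" and "inv t \<in> M" using d1 by (auto simp: Div_iff)
    thus "t \<in> {\<one>}" using MinvM[OF tM] by simp
  qed
  have "x \<in> generate G S \<Longrightarrow> S \<subseteq> {\<one>} \<Longrightarrow> x = \<one>" for x S
    by (induction rule: generate.induct) auto
  hence "H \<subseteq> {\<one>}" using H_def \<open>Div G M d \<subseteq> {\<one>}\<close> by blast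
  moreover have "\<one> \<in> H" using H_sub subgroup.one_closed by blast
  ultimately show False using assms by blast
qed

end


context gctx
begin

lemma lprod_Nil[simp]: "lprod G [] = \<one>" by (simp add: lprod_def)
lemma lprod_Cons[simp]: "lprod G (x # xs) = x \<otimes> lprod G xs" by (simp add: lprod_def)
lemma lprod_car: "set xs \<subseteq> carrier G \<Longrightarrow> lprod G xs \<in> carrier G"
  by (induction xs) auto
lemma lprod_append: "set xs \<subseteq> carrier G \<Longrightarrow> set ys \<subseteq> carrier G \<Longrightarrow>
    lprod G (xs @ ys) = lprod G xs \<otimes> lprod G ys"
  by (induction xs) (auto simp: m_assoc lprod_car)
lemma lprod_filter: "set xs \<subseteq> carrier G \<Longrightarrow> lprod G (filter (\<lambda>s. s \<noteq> \<one>) xs) = lprod G xs"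
  by (induction xs) (auto simp: lprod_car)
lemma pow_comm1: "x \<in> carrier G \<Longrightarrow> x \<otimes> x [^] (n::nat) = x [^] n \<otimes> x"
  using nat_pow_comm[of x "1::nat" n] by simp
lemma lprod_replicate: "x \<in> carrier G \<Longrightarrow> lprod G (replicate n x) = x [^] n"
  by (induction n) (auto simp: pow_comm1)

abbreviation T where "T \<equiv> Div G M D \<union> m_inv G ` Div G M D"
abbreviation GS where "GS \<equiv> gens G M D \<union> m_inv G ` gens G M D"

lemma T_car: "T \<subseteq> carrier G" using DivD_car by auto
lemma GS_T: "GS \<subseteq> T" by (auto simp: gens_def)
lemma T_GS: "s \<in> T \<Longrightarrow> s \<noteq> \<one> \<Longrightarrow> s \<in> GS"
  by (auto simp: gens_def)
lemma fin_GS: "finite GS" using finD by (simp add: gens_def)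

lemma gen_words: "x \<in> generate G S \<Longrightarrow> S \<subseteq> carrier G \<Longrightarrow>
    \<exists>xs. set xs \<subseteq> S \<union> m_inv G ` S \<and> lprod G xs = x"
proof (induction rule: generate.induct)
  case one show ?case by (rule exI[of _ "[]"]) simp
next
  case (incl h) thus ?case by (intro exI[of _ "[h]"]) auto
next
  case (inv h) thus ?case by (intro exI[of _ "[inv h]"]) auto
next
  case (eng h1 h2)
  obtain xs ys where "set xs \<subseteq> S \<union> m_inv G ` S" "lprod G xs = h1" "set ys \<subseteq> S \<union> m_inv G ` S" "lprod G ys = h2"
    using eng by blast
  moreover have "S \<union> m_inv G ` S \<subseteq> carrier G" using eng.prems by auto
  ultimately have "set xs \<subseteq> carrier G" "set ys \<subseteq> carrier G" "lprod G xs = h1" "lprod G ys = h2"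
    "set (xs @ ys) \<subseteq> S \<union> m_inv G ` S" by auto
  thus ?case by (intro exI[of _ "xs @ ys"]) (simp add: lprod_append)
qed

lemma wlen_le: assumes "set xs \<subseteq> T" shows "wlen G M D (lprod G xs) \<le> length xs"
proof -
  let ?ys = "filter (\<lambda>s. s \<noteq> \<one>) xs"
  have "set ?ys \<subseteq> GS" using assms T_GS by auto
  moreover have "lprod G ?ys = lprod G xs" using lprod_filter assms T_car by auto
  ultimately have "wlen G M D (lprod G xs) \<le> length ?ys"
    unfolding wlen_def by (intro Least_le) blast
  also have "\<dots> \<le> length xs" by simp
  finally show ?thesis .
qed

lemma wlen_ex: assumes x: "x \<in> carrier G"
  shows "\<exists>xs. length xs = wlen G M D x \<and> set xs \<subseteq> GS \<and> lprod G xs = x"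
proof -
  obtain xs where xs: "set xs \<subseteq> T" "lprod G xs = x"
    using gen_words[of x "Div G M D"] genD x DivD_car by auto
  let ?ys = "filter (\<lambda>s. s \<noteq> \<one>) xs"
  have "set ?ys \<subseteq> GS" using xs T_GS by auto
  moreover have "lprod G ?ys = x" using lprod_filter xs T_car by auto
  ultimately have "\<exists>n xs. length xs = n \<and> set xs \<subseteq> GS \<and> lprod G xs = x" by blast
  from LeastI_ex[OF this] show ?thesis unfolding wlen_def by blast
qed

lemma lemA: "set xs \<subseteq> T \<Longrightarrow> D [^] length xs \<otimes> lprod G xs \<in> M"
proof (induction xs)
  case Nil show ?case by simp
next
  case (Cons s xs)
  let ?n = "length xs" and ?x = "lprod G xs"
  have xc: "?x \<in> carrier G" using Cons.prems T_car lprod_car by auto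
  have IH: "D [^] ?n \<otimes> ?x \<in> M" using Cons by auto
  have sT: "s \<in> T" using Cons.prems by auto
  show ?case
  proof (cases "s \<in> Div G M D")
    case True
    hence sM: "s \<in> M" using Div_M by auto
    have l: "length (s # xs) = Suc ?n" by simp
    have e: "D [^] length (s # xs) = D \<otimes> D [^] ?n" unfolding l by (rule nat_pow_Suc2[OF D_car])
    have "D [^] length (s # xs) \<otimes> lprod G (s # xs) = D \<otimes> (D [^] ?n \<otimes> s \<otimes> inv (D [^] ?n)) \<otimes> (D [^] ?n \<otimes> ?x)"
      unfolding e lprod_Cons using sM xc by (simp add: m_assoc)
    thus ?thesis using M_conjDn[OF sM] IH by simp
  next
    case False
    then obtain t where t: "t \<in> Div G M D" "s = inv t" using sT by auto
    have tM: "t \<in> M" "D \<otimes> inv t \<in> M" using t DivR_iff[OF balD] by auto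
    have "D [^] length (s # xs) \<otimes> lprod G (s # xs) = (D [^] ?n \<otimes> (D \<otimes> inv t) \<otimes> inv (D [^] ?n)) \<otimes> (D [^] ?n \<otimes> ?x)"
      using t tM xc by (simp add: m_assoc)
    thus ?thesis using M_conjDn[OF tM(2)] IH by simp
  qed
qed

lemma lemA': assumes x: "x \<in> carrier G" and n: "n \<ge> wlen G M D x" shows "D [^] n \<otimes> x \<in> M"
proof -
  obtain xs where xs: "length xs = wlen G M D x" "set xs \<subseteq> GS" "lprod G xs = x"
    using wlen_ex[OF x] by blast
  let ?w = "wlen G M D x"
  have "set xs \<subseteq> T" using xs(2) GS_T by (rule subset_trans)
  hence "D [^] ?w \<otimes> x \<in> M" using lemA[of xs] xs by simp
  hence "D [^] (n - ?w) \<otimes> (D [^] ?w \<otimes> x) \<in> M" using pow_M[OF D_M] by simp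
  moreover have "D [^] (n - ?w) \<otimes> (D [^] ?w \<otimes> x) = D [^] n \<otimes> x"
    using nat_pow_mult[OF D_car, of "n - ?w" ?w] n x by (simp add: m_assoc[symmetric])
  ultimately show ?thesis by simp
qed

lemma omega_car: "omega_i G D w i \<in> carrier G" if "w \<in> carrier G"
  using that by (simp add: omega_i_def Phi_pow_def)

lemma dk_eq: "dk G D (inv d \<otimes> D) k = inv (d [^] k) \<otimes> D [^] k"
proof (induction k)
  case 0 show ?case by (simp add: dk_def)
next
  case (Suc k)
  let ?w = "inv d \<otimes> D"
  have wc: "?w \<in> carrier G" by simp
  have om: "omega_i G D ?w (Suc k) = inv (D [^] k) \<otimes> ?w \<otimes> D [^] k"
  proof -
    have e: "- int (Suc k) + 1 = - int k" by simp
    show ?thesis unfolding omega_i_def Phi_pow_def e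
      by (simp add: int_pow_neg_int int_pow_int)
  qed
  have ul: "[1..<Suc k + 1] = [1..<k + 1] @ [Suc k]" by simp
  have "dk G D ?w (Suc k) = dk G D ?w k \<otimes> omega_i G D ?w (Suc k)"
    unfolding dk_def ul map_append list.map using omega_car[OF wc]
    by (subst lprod_append) (auto simp: lprod_car)
  also have "\<dots> = inv (d [^] Suc k) \<otimes> D [^] Suc k"
    unfolding Suc.IH om nat_pow_Suc2[OF D_car] nat_pow_Suc2[OF d_car]
    by (simp add: inv_mult_group m_assoc)
  finally show ?case .
qed

lemma word1: "\<exists>xs. length xs = k \<and> set xs \<subseteq> T \<and> lprod G xs = inv (D [^] k) \<otimes> d [^] k"
proof (induction k)
  case 0 show ?case by (intro exI[of _ "[]"]) simp
next
  case (Suc k)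
  then obtain xs where xs: "length xs = k" "set xs \<subseteq> T" "lprod G xs = inv (D [^] k) \<otimes> d [^] k" by blast
  let ?t = "inv (D [^] k) \<otimes> (inv d \<otimes> D) \<otimes> D [^] k"
  have "inv d \<otimes> D \<in> Div G M D" using bal_c2[OF balD d_DivD] .
  hence t: "?t \<in> Div G M D" by (rule DivD_conjDn2)
  have "inv ?t \<otimes> (inv (D [^] k) \<otimes> d [^] k) = inv (D [^] Suc k) \<otimes> d [^] Suc k"
    unfolding nat_pow_Suc2[OF D_car] nat_pow_Suc2[OF d_car]
    by (simp add: inv_mult_group m_assoc)
  thus ?case using xs t by (intro exI[of _ "inv ?t # xs"]) auto
qed

lemma dH: "d [^] (n::nat) \<in> H"
proof (induction n)
  case 0 show ?case using H_sub subgroup.one_closed by simp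
next
  case (Suc n)
  have "d \<in> H" using H_def d_Divd generate.incl by metis
  thus ?case using Suc H_sub subgroup.m_closed by fastforce
qed

theorem main:
  assumes Hne: "H \<noteq> carrier G" and H1: "H \<noteq> {\<one>}" and k: "k \<ge> 1"
  shows "diam G M D (proj G M D H (dk G D (inv d \<otimes> D) k)) \<ge> k"
proof -
  define a where "a = dk G D (inv d \<otimes> D) k"
  have a: "a = inv (d [^] k) \<otimes> D [^] k" using dk_eq a_def by simp
  have ac: "a \<in> carrier G" using a by simp
  have ia: "inv a = inv (D [^] k) \<otimes> d [^] k" using a by (simp add: inv_mult_group)
  have lowH: "gdist G M D a b \<ge> k" if b: "b \<in> H" for b
  proof (rule ccontr)
    assume "\<not> ?thesis"
    hence lt0: "wlen G M D (inv a \<otimes> b) < k" by (simp add: gdist_def)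
    obtain w where wdef: "w = wlen G M D (inv a \<otimes> b)" by blast
    have lt: "w < k" using lt0 wdef by simp
    have bc: "b \<in> carrier G" using b H_car by auto
    have g: "d [^] k \<otimes> b \<in> H" using dH b H_sub subgroup.m_closed by fastforce
    have "D [^] w \<otimes> (inv a \<otimes> b) \<in> M" using lemA'[of "inv a \<otimes> b" w] ac bc wdef by simp
    moreover have "D [^] w \<otimes> (inv a \<otimes> b) = inv (D [^] (k - w)) \<otimes> (d [^] k \<otimes> b)"
    proof -
      have e: "D [^] k = D [^] (k - w) \<otimes> D [^] w"
        using nat_pow_mult[OF D_car, of "k - w" w] lt by simp
      show ?thesis unfolding ia e using bc by (simp add: inv_mult_group m_assoc)
    qed
    ultimately show False using not_inf[OF Hne g, of "k - w"] lt by simp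
  qed
  have one_H: "\<one> \<in> H" using H_sub subgroup.one_closed by blast
  have dkH: "inv (d [^] k) \<in> H" using dH H_sub subgroup.m_inv_closed by fastforce
  have up1: "gdist G M D a \<one> \<le> k"
  proof -
    obtain xs where "length xs = k" "set xs \<subseteq> T" "lprod G xs = inv (D [^] k) \<otimes> d [^] k"
      using word1 by blast
    thus ?thesis unfolding gdist_def using ia wlen_le[of xs] by simp
  qed
  have up2: "gdist G M D a (inv (d [^] k)) \<le> k"
  proof -
    have "inv a \<otimes> inv (d [^] k) = lprod G (replicate k (inv D))"
      unfolding ia by (simp add: lprod_replicate nat_pow_inv m_assoc)
    moreover have "set (replicate k (inv D)) \<subseteq> T" using D_DivD by auto
    ultimately show ?thesis unfolding gdist_def using wlen_le[of "replicate k (inv D)"] by simp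
  qed
  have sd: "setdist G M D a H = k"
  proof (rule antisym)
    show "setdist G M D a H \<le> k" unfolding setdist_def
      using Least_le[of "\<lambda>n. \<exists>b\<in>H. gdist G M D a b = n" "gdist G M D a \<one>"] one_H up1 by force
    have "\<exists>n. \<exists>b\<in>H. gdist G M D a b = n" using one_H by blast
    from LeastI_ex[OF this] obtain b where "b \<in> H" "gdist G M D a b = setdist G M D a H"
      unfolding setdist_def by blast
    thus "k \<le> setdist G M D a H" using lowH by fastforce
  qed
  let ?P = "proj G M D H a"
  have p1: "\<one> \<in> ?P" using one_H up1 lowH[OF one_H] sd by (simp add: proj_def)
  have p2: "inv (d [^] k) \<in> ?P" using dkH up2 lowH[OF dkH] sd by (simp add: proj_def)
  have finP: "finite ?P"
  proof -
    have "?P \<subseteq> (\<lambda>xs. a \<otimes> lprod G xs) ` {xs. set xs \<subseteq> GS \<and> length xs = k}"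
    proof
      fix b assume b: "b \<in> ?P"
      hence bH: "b \<in> H" and bd: "gdist G M D a b = k" using sd by (auto simp: proj_def)
      have bc: "b \<in> carrier G" using bH H_car by auto
      obtain xs where xs: "length xs = wlen G M D (inv a \<otimes> b)" "set xs \<subseteq> GS" "lprod G xs = inv a \<otimes> b"
        using wlen_ex[of "inv a \<otimes> b"] ac bc by auto
      show "b \<in> (\<lambda>xs. a \<otimes> lprod G xs) ` {xs. set xs \<subseteq> GS \<and> length xs = k}"
      proof (rule image_eqI[where x = xs])
        show "b = a \<otimes> lprod G xs" unfolding xs(3) by (rule cancel_simps(1)[OF ac bc, symmetric])
        show "xs \<in> {xs. set xs \<subseteq> GS \<and> length xs = k}" using xs bd by (simp add: gdist_def)
      qed
    qed
    moreover have "finite {xs. set xs \<subseteq> GS \<and> length xs = k}"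
      by (rule finite_lists_length_eq[OF fin_GS])
    ultimately show ?thesis by (blast intro: finite_subset[OF _ finite_imageI])
  qed
  have far: "gdist G M D \<one> (inv (d [^] k)) \<ge> k"
  proof (rule ccontr)
    assume "\<not> ?thesis"
    hence lt: "wlen G M D (inv (d [^] k)) < k" by (simp add: gdist_def)
    have "D [^] (k - 1) \<otimes> inv (d [^] k) \<in> M" using lemA'[of "inv (d [^] k)" "k - 1"] lt by simp
    moreover have "Suc (k - 1) = k" using k by simp
    ultimately show False using not_sup[OF d_ne1[OF H1], of "k - 1"] by simp
  qed
  have "gdist G M D \<one> (inv (d [^] k)) \<le> diam G M D ?P"
    unfolding diam_def using p1 p2 finP
    by (intro Max_ge) (auto intro!: image_eqI[of _ _ "(\<one>, inv (d [^] k))"])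
  thus ?thesis using far a_def by simp
qed

end


theorem lemma5p3:
  fixes G :: "('a, 'b) monoid_scheme" and M H N :: "'a set" and \<Delta> \<delta> :: 'a and k :: nat
  assumes "garside G M \<Delta>"
    and "parabolic G M \<Delta> H N \<delta>"
    and "H \<noteq> carrier G" and "H \<noteq> {\<one>\<^bsub>G\<^esub>}"
    and "k \<ge> 1"
  shows "diam G M \<Delta> (proj G M \<Delta> H (dk G \<Delta> (inv\<^bsub>G\<^esub> \<delta> \<otimes>\<^bsub>G\<^esub> \<Delta>) k)) \<ge> k"
proof -
  have grp: "group G" using assms(1) by (simp add: garside_def)
  interpret gctx G M \<Delta> \<delta> H N
    using grp assms(1,2) by (simp add: gctx_def gctx_axioms_def)
  show ?thesis using main[OF assms(3,4,5)] by simp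
qed

end
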